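(* Let $G^1$ be a 1-wconnected 1-graph with infinitely many boundary 1-nodes (not necessarily locally 1-finite). Suppose ${}^{*}G^1$ has a hypernode (of rank 0 or 1) that is not in its principal 1-galaxy $\Gamma_0^1$. Then there exist 1-galaxies $\Gamma_i^1$, $i\in\mathbb Z$, all different from $\Gamma_0^1$, such that for all integers $i<j$ the 1-galaxy $\Gamma_i^1$ is closer to $\Gamma_0^1$ than is $\Gamma_j^1$.
   Context: 1-graphs. A 1-graph $G^1=\{X^0,B,X^1\}$ consists of a graph $G^0=\{X^0,B\}$ (0-nodes, with branches as two-element sets) and 1-nodes. The 1-nodes are obtained by partitioning the 0-tips of $G^0$ (classes of eventually identical one-ended paths) into subsets, some augmented by a single 0-node (each 0-node used at most once). Wdistance. The wdistance $d(x,y)$ is the minimum ordinal length of a two-ended 0-walk or 1-walk terminating at $x$ and $y$. A finite 0-walk has length equal to its number of branch traversals; each 0-tip traversal contributes $\omega$; 1-walk lengths are natural sums. Thus $d<\omega^2$. $\oplus$ denotes the natural sum of ordinals. 1-wconnected: any two nodes are joined by such a walk. A 0-section is the subgraph of $G^0$ induced by a maximal set of pairwise path-connected branches. A boundary 1-node is a 1-node incident to at least two 0-sections. Enlargement. Fix a free ultrafilter $\mathcal F$ on $\mathbb N$. Hypernodes are classes $[x_n]$ of sequences of 0-nodes or of 1-nodes, modulo agreement on a set in $\mathcal F$. A standard hypernode is the class of a constant sequence. 1-galaxies. Hypernodes $[x_n],[y_n]$ are 1-limitedly distant if $\{n:d(x_n,y_n)\le\omega\cdot k\}\in\mathcal F$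 for some $k\in\mathbb N$. 1-galaxies are the equivalence classes of this relation together with the hyperbranches between their 0-hypernodes. The principal 1-galaxy $\Gamma_0^1$ contains the standard hypernodes. Closeness. For 1-galaxies $\Gamma_a^1,\Gamma_b^1\ne\Gamma_0^1$, $\Gamma^1_a$ is closer to $\Gamma_0^1$ than is $\Gamma_b^1$ if there exist $[y_n]\in\Gamma_a^1$, $[z_n]\in\Gamma_b^1$ and $[x_n]\in\Gamma_0^1$ with $\{n: d(z_n,x_n)\ge d(y_n,x_n)\oplus\omega\cdot m\}\in\mathcal F$ for every $m\in\mathbb N$. *)

theory Defs
  imports Main "HOL-Library.Product_Lexorder"
begin

text \<open>An ordinal \<open>\<omega>\<cdot>k + n < \<omega>\<^sup>2\<close> is represented by the pair \<open>(k, n)\<close>;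
  the lexicographic order on pairs (Product_Lexorder) is exactly the ordinal order,
  and the natural sum is componentwise addition.\<close>

type_synonym wlen = "nat \<times> nat"

definition natsum :: "wlen \<Rightarrow> wlen \<Rightarrow> wlen" where
  "natsum a b = (fst a + fst b, snd a + snd b)"

definition omega_times :: "nat \<Rightarrow> wlen" where
  "omega_times k = (k, 0)"

text \<open>A 0-graph is \<open>(X0, B)\<close>: a set of 0-nodes and a set of branches, each branch a
  two-element set of 0-nodes.\<close>

definition path0 :: "'v set set \<Rightarrow> (nat \<Rightarrow> 'v) \<Rightarrow> bool" where
  "path0 B p \<longleftrightarrow> inj p \<and> (\<forall>i. {p i, p (Suc i)} \<in> B)"

definition eventually_identical :: "(nat \<Rightarrow> 'v) \<Rightarrow> (nat \<Rightarrow> 'v) \<Rightarrow> bool" where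
  "eventually_identical p q \<longleftrightarrow> (\<exists>i j. \<forall>k. p (i + k) = q (j + k))"

definition tips0 :: "'v set set \<Rightarrow> (nat \<Rightarrow> 'v) set set" where
  "tips0 B = {{q. path0 B q \<and> eventually_identical p q} | p. path0 B p}"

text \<open>A 1-node is a (nonempty) set of 0-tips, optionally augmented by a single 0-node.\<close>
type_synonym 'v node1 = "(nat \<Rightarrow> 'v) set set \<times> 'v option"

text \<open>Nodes of the 1-graph: 0-nodes (Inl) and 1-nodes (Inr).\<close>
type_synonym 'v gnode = "'v + 'v node1"

definition one_graph :: "'v set \<Rightarrow> 'v set set \<Rightarrow> 'v node1 set \<Rightarrow> bool" where
  "one_graph X0 B X1 \<longleftrightarrow>
     (\<forall>b\<in>B. b \<subseteq> X0 \<and> card b = 2) \<and>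
     (\<forall>u\<in>X1. fst u \<noteq> {} \<and> fst u \<subseteq> tips0 B) \<and>
     (\<Union>u\<in>X1. fst u) = tips0 B \<and>
     (\<forall>u\<in>X1. \<forall>u'\<in>X1. u \<noteq> u' \<longrightarrow> fst u \<inter> fst u' = {}) \<and>
     (\<forall>u\<in>X1. \<forall>v. snd u = Some v \<longrightarrow> v \<in> X0) \<and>
     (\<forall>u\<in>X1. \<forall>u'\<in>X1. \<forall>v. snd u = Some v \<and> snd u' = Some v \<longrightarrow> u = u')"

definition gnodes :: "'v set \<Rightarrow> 'v node1 set \<Rightarrow> 'v gnode set" where
  "gnodes X0 X1 = Inl ` X0 \<union> Inr ` X1"

definition meets :: "'v gnode \<Rightarrow> 'v \<Rightarrow> bool" where
  "meets x v \<longleftrightarrow> x = Inl v \<or> (\<exists>u. x = Inr u \<and> snd u = Some v)"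

definition tip_at :: "'v gnode \<Rightarrow> (nat \<Rightarrow> 'v) set \<Rightarrow> bool" where
  "tip_at x t \<longleftrightarrow> (\<exists>u. x = Inr u \<and> t \<in> fst u)"

definition traverses :: "'v set set \<Rightarrow> (nat \<Rightarrow> 'v) \<Rightarrow> (nat \<Rightarrow> 'v) set \<Rightarrow> bool" where
  "traverses B f t \<longleftrightarrow> (\<forall>i. {f i, f (Suc i)} \<in> B) \<and>
     (\<exists>i. path0 B (\<lambda>k. f (i + k)) \<and> (\<lambda>k. f (i + k)) \<in> t)"

text \<open>A 0-walk segment of a walk from node \<open>x\<close> to node \<open>y\<close>, with its length:
  finite (n branch traversals, length n), one-ended in either direction (length \<omega>),
  or endless (two tips, length \<omega>\<cdot>2).\<close>
definition seg0 :: "'v set set \<Rightarrow> 'v gnode \<Rightarrow> 'v gnode \<Rightarrow> wlen \<Rightarrow> bool" where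
  "seg0 B x y l \<longleftrightarrow>
     (\<exists>f :: nat \<Rightarrow> 'v. \<exists>n. (\<forall>i<n. {f i, f (Suc i)} \<in> B) \<and> meets x (f 0) \<and> meets y (f n)
        \<and> l = (0, n))
   \<or> (\<exists>f t. meets x (f 0) \<and> traverses B f t \<and> tip_at y t \<and> l = (1, 0))
   \<or> (\<exists>f t. meets y (f 0) \<and> traverses B f t \<and> tip_at x t \<and> l = (1, 0))
   \<or> (\<exists>f :: int \<Rightarrow> 'v. \<exists>t1 t2. (\<forall>i. {f i, f (i + 1)} \<in> B) \<and>
        traverses B (\<lambda>k. f (- int k)) t1 \<and> tip_at x t1 \<and>
        traverses B (\<lambda>k. f (int k)) t2 \<and> tip_at y t2 \<and> l = (2, 0))"

definition has_walk :: "'v set \<Rightarrow> 'v set set \<Rightarrow> 'v node1 set \<Rightarrow>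
    'v gnode \<Rightarrow> 'v gnode \<Rightarrow> wlen \<Rightarrow> bool" where
  "has_walk X0 B X1 x y l \<longleftrightarrow> x \<in> gnodes X0 X1 \<and> y \<in> gnodes X0 X1 \<and>
     ((x = y \<and> l = (0, 0)) \<or>
      (\<exists>m :: nat. \<exists>xs :: nat \<Rightarrow> 'v gnode. \<exists>ls :: nat \<Rightarrow> wlen. m \<ge> 1 \<and>
         xs 0 = x \<and> xs m = y \<and> (\<forall>i. 0 < i \<and> i < m \<longrightarrow> xs i \<in> Inr ` X1) \<and>
         (\<forall>i<m. seg0 B (xs i) (xs (Suc i)) (ls i)) \<and>
         l = ((\<Sum>i<m. fst (ls i)), (\<Sum>i<m. snd (ls i)))))"

definition wconnected1 :: "'v set \<Rightarrow> 'v set set \<Rightarrow> 'v node1 set \<Rightarrow> bool" where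
  "wconnected1 X0 B X1 \<longleftrightarrow>
     (\<forall>x\<in>gnodes X0 X1. \<forall>y\<in>gnodes X0 X1. \<exists>l. has_walk X0 B X1 x y l)"

definition wdist :: "'v set \<Rightarrow> 'v set set \<Rightarrow> 'v node1 set \<Rightarrow>
    'v gnode \<Rightarrow> 'v gnode \<Rightarrow> wlen" where
  "wdist X0 B X1 x y = (LEAST l. has_walk X0 B X1 x y l)"

definition branch_conn :: "'v set set \<Rightarrow> 'v set \<Rightarrow> 'v set \<Rightarrow> bool" where
  "branch_conn B b b' \<longleftrightarrow>
     (\<exists>a\<in>b. \<exists>c\<in>b'. (a, c) \<in> {(p, q). {p, q} \<in> B}\<^sup>*)"

text \<open>0-sections, each given by its set of branches (maximal sets of pairwise
  path-connected branches).\<close>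
definition sections0 :: "'v set set \<Rightarrow> 'v set set set" where
  "sections0 B = {{b'\<in>B. branch_conn B b b'} | b. b \<in> B}"

definition incident_section :: "'v node1 \<Rightarrow> 'v set set \<Rightarrow> bool" where
  "incident_section u S \<longleftrightarrow>
     (\<exists>v. snd u = Some v \<and> v \<in> \<Union>S) \<or>
     (\<exists>t\<in>fst u. \<exists>p\<in>t. \<forall>i. {p i, p (Suc i)} \<in> S)"

definition boundary_1node :: "'v set set \<Rightarrow> 'v node1 set \<Rightarrow> 'v node1 \<Rightarrow> bool" where
  "boundary_1node B X1 u \<longleftrightarrow> u \<in> X1 \<and>
     (\<exists>S1\<in>sections0 B. \<exists>S2\<in>sections0 B. S1 \<noteq> S2 \<and>
        incident_section u S1 \<and> incident_section u S2)"

definition free_ultrafilter :: "nat filter \<Rightarrow> bool" where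
  "free_ultrafilter F \<longleftrightarrow> F \<noteq> bot \<and>
     (\<forall>P. eventually P F \<or> eventually (\<lambda>n. \<not> P n) F) \<and>
     (\<forall>k. eventually (\<lambda>n. n \<noteq> k) F)"

text \<open>Representatives of hypernodes: sequences of 0-nodes or sequences of 1-nodes
  (a hypernode is the class of such a sequence modulo agreement on a set in \<open>F\<close>;
  all notions below are invariant under that equivalence).\<close>
definition hyper_seq :: "'v set \<Rightarrow> 'v node1 set \<Rightarrow> (nat \<Rightarrow> 'v gnode) \<Rightarrow> bool" where
  "hyper_seq X0 X1 s \<longleftrightarrow> (\<forall>n. s n \<in> Inl ` X0) \<or> (\<forall>n. s n \<in> Inr ` X1)"

definition limitedly_distant1 :: "nat filter \<Rightarrow> 'v set \<Rightarrow> 'v set set \<Rightarrow> 'v node1 set \<Rightarrow>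
    (nat \<Rightarrow> 'v gnode) \<Rightarrow> (nat \<Rightarrow> 'v gnode) \<Rightarrow> bool" where
  "limitedly_distant1 F X0 B X1 s s' \<longleftrightarrow>
     (\<exists>k::nat. eventually (\<lambda>n. wdist X0 B X1 (s n) (s' n) \<le> omega_times k) F)"

text \<open>A hypernode lies in the principal 1-galaxy iff it is 1-limitedly distant from a
  standard hypernode (class of a constant sequence).\<close>
definition in_principal1 :: "nat filter \<Rightarrow> 'v set \<Rightarrow> 'v set set \<Rightarrow> 'v node1 set \<Rightarrow>
    (nat \<Rightarrow> 'v gnode) \<Rightarrow> bool" where
  "in_principal1 F X0 B X1 s \<longleftrightarrow>
     (\<exists>x\<in>gnodes X0 X1. limitedly_distant1 F X0 B X1 (\<lambda>_. x) s)"

text \<open>1-galaxies are represented by representative hypernodes \<open>a\<close> (the galaxy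
  being the class of hypernodes 1-limitedly distant from \<open>a\<close>).\<close>
definition closer1 :: "nat filter \<Rightarrow> 'v set \<Rightarrow> 'v set set \<Rightarrow> 'v node1 set \<Rightarrow>
    (nat \<Rightarrow> 'v gnode) \<Rightarrow> (nat \<Rightarrow> 'v gnode) \<Rightarrow> bool" where
  "closer1 F X0 B X1 a b \<longleftrightarrow>
     (\<exists>y z x. hyper_seq X0 X1 y \<and> hyper_seq X0 X1 z \<and> hyper_seq X0 X1 x \<and>
        limitedly_distant1 F X0 B X1 a y \<and> limitedly_distant1 F X0 B X1 b z \<and>
        in_principal1 F X0 B X1 x \<and>
        (\<forall>m::nat. eventually (\<lambda>n. natsum (wdist X0 B X1 (y n) (x n)) (omega_times m)
                                     \<le> wdist X0 B X1 (z n) (x n)) F))"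

end

theory Submission
  imports Defs Complex_Main
begin


inductive W for X0 :: "'v set" and B :: "'v set set" and X1 :: "'v node1 set"
  where
  single: "x \<in> gnodes X0 X1 \<Longrightarrow> y \<in> gnodes X0 X1 \<Longrightarrow> seg0 B x y l \<Longrightarrow> W X0 B X1 x y l"
| step: "W X0 B X1 x y l \<Longrightarrow> y \<in> Inr ` X1 \<Longrightarrow> z \<in> gnodes X0 X1 \<Longrightarrow> seg0 B y z l'
     \<Longrightarrow> W X0 B X1 x z (natsum l l')"

lemma Inr_gnodes: "y \<in> Inr ` X1 \<Longrightarrow> y \<in> gnodes X0 X1"
  by (auto simp: gnodes_def)

lemma W_gnodes: "W X0 B X1 x y l \<Longrightarrow> x \<in> gnodes X0 X1 \<and> y \<in> gnodes X0 X1"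
  by (induction rule: W.induct) auto

lemma W_to_walk:
  assumes "W X0 B X1 x y l"
  shows "\<exists>m :: nat. \<exists>xs :: nat \<Rightarrow> 'v gnode. \<exists>ls :: nat \<Rightarrow> wlen. m \<ge> 1 \<and>
         xs 0 = x \<and> xs m = y \<and> (\<forall>i. 0 < i \<and> i < m \<longrightarrow> xs i \<in> Inr ` X1) \<and>
         (\<forall>i<m. seg0 B (xs i) (xs (Suc i)) (ls i)) \<and>
         l = ((\<Sum>i<m. fst (ls i)), (\<Sum>i<m. snd (ls i)))"
  using assms
proof (induction rule: W.induct)
  case (single x y l)
  show ?case
    by (rule exI[of _ 1], rule exI[of _ "\<lambda>i. if i = 0 then x else y"], rule exI[of _ "\<lambda>_. l"])
       (use single in auto)
next
  case (step x y l z l')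
  then obtain m xs ls where h: "m \<ge> 1" "xs 0 = x" "xs m = y" "\<forall>i. 0 < i \<and> i < m \<longrightarrow> xs i \<in> Inr ` X1"
    "\<forall>i<m. seg0 B (xs i) (xs (Suc i)) (ls i)" "l = ((\<Sum>i<m. fst (ls i)), (\<Sum>i<m. snd (ls i)))"
    by blast
  show ?case
  proof (rule exI[of _ "Suc m"], rule exI[of _ "xs(Suc m := z)"], rule exI[of _ "ls(m := l')"], intro conjI allI impI)
    show "(xs(Suc m := z)) 0 = x" using h by auto
    show "(xs(Suc m := z)) (Suc m) = z" by simp
    fix i assume "0 < i \<and> i < Suc m" then show "(xs(Suc m := z)) i \<in> Inr ` X1"
      using h step by (cases "i = m") auto
  next
    fix i assume "i < Suc m" then show "seg0 B ((xs(Suc m := z)) i) ((xs(Suc m := z)) (Suc i)) ((ls(m := l')) i)"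
      using h step by (cases "i = m") auto
  next
    have e1: "(\<Sum>i<m. fst ((ls(m := l')) i)) = (\<Sum>i<m. fst (ls i))" by (rule sum.cong) auto
    have e2: "(\<Sum>i<m. snd ((ls(m := l')) i)) = (\<Sum>i<m. snd (ls i))" by (rule sum.cong) auto
    show "natsum l l' = (\<Sum>i<Suc m. fst ((ls(m := l')) i), \<Sum>i<Suc m. snd ((ls(m := l')) i))"
      using h e1 e2 by (simp add: natsum_def)
  qed auto
qed

lemma walk_to_W:
  assumes "m \<ge> 1" "xs 0 = x" "x \<in> gnodes X0 X1" "xs m \<in> gnodes X0 X1"
    "\<forall>i. 0 < i \<and> i < m \<longrightarrow> xs i \<in> Inr ` X1"
    "\<forall>i<m. seg0 B (xs i) (xs (Suc i)) (ls i)"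
  shows "W X0 B X1 x (xs m) ((\<Sum>i<m. fst (ls i)), (\<Sum>i<m. snd (ls i)))"
proof -
  have gn: "xs k \<in> gnodes X0 X1" if "k \<le> m" for k
    using assms that Inr_gnodes[of "xs k" X1 X0] by (cases "k = 0"; cases "k = m") auto
  have "k \<le> m \<Longrightarrow> 1 \<le> k \<Longrightarrow> W X0 B X1 x (xs k) ((\<Sum>i<k. fst (ls i)), (\<Sum>i<k. snd (ls i)))" for k
  proof (induction k)
    case 0 then show ?case by simp
  next
    case (Suc k)
    show ?case
    proof (cases "k = 0")
      case True
      then show ?thesis using assms gn[of 1] Suc by (auto intro!: W.single)
    next
      case False
      then have "W X0 B X1 x (xs k) ((\<Sum>i<k. fst (ls i)), (\<Sum>i<k. snd (ls i)))" using Suc by auto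
      from W.step[OF this, of "xs (Suc k)" "ls k"] show ?thesis
        using assms gn[of "Suc k"] Suc False by (auto simp: natsum_def)
    qed
  qed
  then show ?thesis using assms by auto
qed

lemma hw_iff: "has_walk X0 B X1 x y l \<longleftrightarrow> x \<in> gnodes X0 X1 \<and> y \<in> gnodes X0 X1 \<and>
   ((x = y \<and> l = (0, 0)) \<or> W X0 B X1 x y l)"
proof
  assume h: "has_walk X0 B X1 x y l"
  then have g: "x \<in> gnodes X0 X1" "y \<in> gnodes X0 X1" by (auto simp: has_walk_def)
  show "x \<in> gnodes X0 X1 \<and> y \<in> gnodes X0 X1 \<and> ((x = y \<and> l = (0, 0)) \<or> W X0 B X1 x y l)"
    using h g walk_to_W[of _ _ x X0 X1] unfolding has_walk_def by metis
next
  assume "x \<in> gnodes X0 X1 \<and> y \<in> gnodes X0 X1 \<and> ((x = y \<and> l = (0, 0)) \<or> W X0 B X1 x y l)"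
  then show "has_walk X0 B X1 x y l" unfolding has_walk_def using W_to_walk by metis
qed



lemma natsum_assoc: "natsum (natsum a b) c = natsum a (natsum b c)"
  by (simp add: natsum_def)
lemma natsum_comm: "natsum a b = natsum b a"
  by (simp add: natsum_def)

lemma W_concat: "W X0 B X1 y z b \<Longrightarrow> W X0 B X1 x y a \<Longrightarrow> y \<in> Inr ` X1 \<Longrightarrow> W X0 B X1 x z (natsum a b)"
proof (induction rule: W.induct)
  case (single y z l)
  then show ?case by (auto intro: W.step)
next
  case (step y u l z l')
  then show ?case using W.step[of X0 B X1 x u "natsum a l" z l'] by (simp add: natsum_assoc)
qed

lemma seg_rev: "seg0 B x y l \<Longrightarrow> seg0 B y x l"
  unfolding seg0_def
proof (elim disjE exE conjE)
  fix f :: "nat \<Rightarrow> 'a" and n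
  assume h: "\<forall>i<n. {f i, f (Suc i)} \<in> B" "meets x (f 0)" "meets y (f n)" "l = (0, n)"
  have "\<forall>i<n. {f (n - i), f (n - Suc i)} \<in> B"
  proof (intro allI impI)
    fix i assume "i < n"
    then have "{f (n - Suc i), f (Suc (n - Suc i))} \<in> B" using h by auto
    moreover have "Suc (n - Suc i) = n - i" using \<open>i < n\<close> by auto
    ultimately show "{f (n - i), f (n - Suc i)} \<in> B" by (simp add: insert_commute)
  qed
  then have "(\<exists>g :: nat \<Rightarrow> 'a. \<exists>n. (\<forall>i<n. {g i, g (Suc i)} \<in> B) \<and> meets y (g 0) \<and> meets x (g n) \<and> l = (0, n))"
    using h by (intro exI[of _ "\<lambda>i. f (n - i)"] exI[of _ n]) auto
  then show "(\<exists>f n. (\<forall>i<n. {f i, f (Suc i)} \<in> B) \<and> meets y (f 0) \<and> meets x (f n) \<and> l = (0, n)) \<or>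
    (\<exists>f t. meets y (f 0) \<and> traverses B f t \<and> tip_at x t \<and> l = (1, 0)) \<or>
    (\<exists>f t. meets x (f 0) \<and> traverses B f t \<and> tip_at y t \<and> l = (1, 0)) \<or>
    (\<exists>f t1 t2. (\<forall>i. {f i, f (i + 1)} \<in> B) \<and> traverses B (\<lambda>k. f (- int k)) t1 \<and> tip_at y t1 \<and>
       traverses B (\<lambda>k. f (int k)) t2 \<and> tip_at x t2 \<and> l = (2, 0))" by blast
next
  fix f :: "int \<Rightarrow> 'a" and t1 t2
  assume h: "\<forall>i. {f i, f (i + 1)} \<in> B" "traverses B (\<lambda>k. f (- int k)) t1" "tip_at x t1"
    "traverses B (\<lambda>k. f (int k)) t2" "tip_at y t2" "l = (2, 0)"
  have "\<forall>i. {f (- i), f (- (i + 1))} \<in> B"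
  proof
    fix i :: int
    have "{f (- i - 1), f (- i - 1 + 1)} \<in> B" using h by blast
    then show "{f (- i), f (- (i + 1))} \<in> B" by (simp add: insert_commute)
  qed
  then have "\<exists>g :: int \<Rightarrow> 'a. \<exists>t1 t2. (\<forall>i. {g i, g (i + 1)} \<in> B) \<and> traverses B (\<lambda>k. g (- int k)) t1 \<and> tip_at y t1 \<and>
       traverses B (\<lambda>k. g (int k)) t2 \<and> tip_at x t2 \<and> l = (2, 0)"
    using h by (intro exI[of _ "\<lambda>i. f (- i)"] exI[of _ t2] exI[of _ t1]) auto
  then show "(\<exists>f n. (\<forall>i<n. {f i, f (Suc i)} \<in> B) \<and> meets y (f 0) \<and> meets x (f n) \<and> l = (0, n)) \<or>
    (\<exists>f t. meets y (f 0) \<and> traverses B f t \<and> tip_at x t \<and> l = (1, 0)) \<or>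
    (\<exists>f t. meets x (f 0) \<and> traverses B f t \<and> tip_at y t \<and> l = (1, 0)) \<or>
    (\<exists>f t1 t2. (\<forall>i. {f i, f (i + 1)} \<in> B) \<and> traverses B (\<lambda>k. f (- int k)) t1 \<and> tip_at y t1 \<and>
       traverses B (\<lambda>k. f (int k)) t2 \<and> tip_at x t2 \<and> l = (2, 0))" by blast
qed blast+

lemma W_rev: "W X0 B X1 x y l \<Longrightarrow> W X0 B X1 y x l"
proof (induction rule: W.induct)
  case (single x y l)
  then show ?case by (auto intro: W.single seg_rev)
next
  case (step x y l z l')
  have "W X0 B X1 z y l'" using step W_gnodes[OF step(1)] by (auto intro: W.single seg_rev)
  from W_concat[OF step(5) this step(2)] show ?case by (simp add: natsum_comm)
qed

lemma seg_fst: "seg0 B x y l \<Longrightarrow> fst l \<le> 2"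
  unfolding seg0_def by auto

lemma meets_Inl: "meets (Inl v) w \<longleftrightarrow> w = v"
  by (auto simp: meets_def)
lemma tip_at_Inl: "\<not> tip_at (Inl v) t"
  by (auto simp: tip_at_def)



lemma seg_merge:
  assumes s1: "seg0 B u (Inl v) a" and s2: "seg0 B (Inl v) w b"
  shows "\<exists>c. seg0 B u w c \<and> fst c \<le> fst a + fst b"
proof -
  from s1 have A: "(\<exists>f :: nat \<Rightarrow> 'a. \<exists>n. (\<forall>i<n. {f i, f (Suc i)} \<in> B) \<and> meets u (f 0) \<and> f n = v \<and> a = (0, n))
     \<or> (\<exists>f t. f 0 = v \<and> traverses B f t \<and> tip_at u t \<and> a = (1, 0))"
    unfolding seg0_def by (auto simp: meets_Inl tip_at_Inl)
  from s2 have Bb: "(\<exists>f :: nat \<Rightarrow> 'a. \<exists>n. (\<forall>i<n. {f i, f (Suc i)} \<in> B) \<and> f 0 = v \<and> meets w (f n) \<and> b = (0, n))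
     \<or> (\<exists>f t. f 0 = v \<and> traverses B f t \<and> tip_at w t \<and> b = (1, 0))"
    unfolding seg0_def by (auto simp: meets_Inl tip_at_Inl)
  from A show ?thesis
  proof (elim disjE exE conjE)
    fix f1 :: "nat \<Rightarrow> 'a" and n1
    assume a1: "\<forall>i<n1. {f1 i, f1 (Suc i)} \<in> B" "meets u (f1 0)" "f1 n1 = v" "a = (0, n1)"
    from Bb show ?thesis
    proof (elim disjE exE conjE)
      fix f2 :: "nat \<Rightarrow> 'a" and n2
      assume b1: "\<forall>i<n2. {f2 i, f2 (Suc i)} \<in> B" "f2 0 = v" "meets w (f2 n2)" "b = (0, n2)"
      define f where "f i = (if i < n1 then f1 i else f2 (i - n1))" for i
      have br: "\<forall>i<n1+n2. {f i, f (Suc i)} \<in> B"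
      proof (intro allI impI)
        fix i assume i: "i < n1 + n2"
        show "{f i, f (Suc i)} \<in> B"
        proof (cases "i < n1")
          case True
          then have "Suc i < n1 \<or> Suc i = n1" by auto
          then have "f (Suc i) = f1 (Suc i)" using a1 b1 by (auto simp: f_def)
          then show ?thesis using True a1 by (auto simp: f_def)
        next
          case False
          then have "f i = f2 (i - n1)" "f (Suc i) = f2 (Suc (i - n1))" by (auto simp: f_def Suc_diff_le)
          then show ?thesis using b1 i False by auto
        qed
      qed
      have "meets u (f 0)" using a1 b1 by (cases "n1 = 0") (auto simp: f_def)
      moreover have "meets w (f (n1 + n2))" using b1 by (auto simp: f_def)
      ultimately have "seg0 B u w (0, n1 + n2)" unfolding seg0_def using br by blast
      then show ?thesis using a1 b1 by auto
    next
      fix f2 :: "nat \<Rightarrow> 'a" and t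
      assume b1: "f2 0 = v" "traverses B f2 t" "tip_at w t" "b = (1, 0)"
      define f where "f i = (if i < n1 then f1 i else f2 (i - n1))" for i
      have br: "\<forall>i. {f i, f (Suc i)} \<in> B"
      proof (intro allI impI)
        fix i
        show "{f i, f (Suc i)} \<in> B"
        proof (cases "i < n1")
          case True
          then have "Suc i < n1 \<or> Suc i = n1" by auto
          then have "f (Suc i) = f1 (Suc i)" using a1 b1 by (auto simp: f_def)
          then show ?thesis using True a1 by (auto simp: f_def)
        next
          case False
          then have "f i = f2 (i - n1)" "f (Suc i) = f2 (Suc (i - n1))" by (auto simp: f_def Suc_diff_le)
          then show ?thesis using b1 False by (auto simp: traverses_def)
        qed
      qed
      obtain i0 where i0: "path0 B (\<lambda>k. f2 (i0 + k)) \<and> (\<lambda>k. f2 (i0 + k)) \<in> t"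
        using b1 by (auto simp: traverses_def)
      have "(\<lambda>k. f (i0 + n1 + k)) = (\<lambda>k. f2 (i0 + k))" by (auto simp: f_def)
      then have "traverses B f t" using br i0 unfolding traverses_def by metis
      moreover have "meets u (f 0)" using a1 b1 by (cases "n1 = 0") (auto simp: f_def)
      ultimately have "seg0 B u w (1, 0)" unfolding seg0_def using b1 by blast
      then show ?thesis using a1 b1 by auto
    qed
  next
    fix f3 :: "nat \<Rightarrow> 'a" and t1
    assume a1: "f3 0 = v" "traverses B f3 t1" "tip_at u t1" "a = (1, 0)"
    from Bb show ?thesis
    proof (elim disjE exE conjE)
      fix f1 :: "nat \<Rightarrow> 'a" and n1
      assume b1: "\<forall>i<n1. {f1 i, f1 (Suc i)} \<in> B" "f1 0 = v" "meets w (f1 n1)" "b = (0, n1)"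
      define f where "f i = (if i < n1 then f1 (n1 - i) else f3 (i - n1))" for i
      have br: "\<forall>i. {f i, f (Suc i)} \<in> B"
      proof (intro allI impI)
        fix i
        show "{f i, f (Suc i)} \<in> B"
        proof (cases "i < n1")
          case True
          then have "f (Suc i) = f1 (n1 - Suc i)" using a1 b1 by (auto simp: f_def)
          moreover have "f i = f1 (Suc (n1 - Suc i))" using True by (auto simp: f_def Suc_diff_Suc)
          moreover have "{f1 (n1 - Suc i), f1 (Suc (n1 - Suc i))} \<in> B" using b1 True by auto
          ultimately show ?thesis by (simp add: insert_commute)
        next
          case False
          then have "f i = f3 (i - n1)" "f (Suc i) = f3 (Suc (i - n1))" by (auto simp: f_def Suc_diff_le)
          then show ?thesis using a1 False by (auto simp: traverses_def)
        qed
      qed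
      obtain i0 where i0: "path0 B (\<lambda>k. f3 (i0 + k)) \<and> (\<lambda>k. f3 (i0 + k)) \<in> t1"
        using a1 by (auto simp: traverses_def)
      have "(\<lambda>k. f (i0 + n1 + k)) = (\<lambda>k. f3 (i0 + k))" by (auto simp: f_def)
      then have "traverses B f t1" using br i0 unfolding traverses_def by metis
      moreover have "meets w (f 0)" using a1 b1 by (cases "n1 = 0") (auto simp: f_def)
      ultimately have "seg0 B u w (1, 0)" unfolding seg0_def using a1 by blast
      then show ?thesis using a1 b1 by auto
    next
      fix f2 :: "nat \<Rightarrow> 'a" and t2
      assume b1: "f2 0 = v" "traverses B f2 t2" "tip_at w t2" "b = (1, 0)"
      define f where "f i = (if 0 \<le> i then f2 (nat i) else f3 (nat (- i)))" for i :: int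
      have br: "\<forall>i. {f i, f (i + 1)} \<in> B"
      proof
        fix i :: int
        show "{f i, f (i + 1)} \<in> B"
        proof (cases "0 \<le> i")
          case True
          then have "f i = f2 (nat i)" "f (i + 1) = f2 (Suc (nat i))" by (auto simp: f_def nat_add_distrib)
          then show ?thesis using b1 by (auto simp: traverses_def)
        next
          case False
          then have "f i = f3 (Suc (nat (- i - 1)))" by (auto simp: f_def) (smt (verit) Suc_nat_eq_nat_zadd1)
          moreover have "f (i + 1) = f3 (nat (- i - 1))" using False a1 b1 by (auto simp: f_def)
          ultimately show ?thesis using a1 by (auto simp: traverses_def insert_commute)
        qed
      qed
      have e1: "(\<lambda>k. f (- int k)) = f3" using a1 b1 by (auto simp: f_def)
      have e2: "(\<lambda>k. f (int k)) = f2" by (auto simp: f_def)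
      have "seg0 B u w (2, 0)" unfolding seg0_def using br e1 e2 a1 b1
        by (intro disjI2) (metis (no_types, lifting))
      then show ?thesis using a1 b1 by auto
    qed
  qed
qed



lemma W_last: "W X0 B X1 x z l \<Longrightarrow> seg0 B x z l \<or>
  (\<exists>u l1 l2. W X0 B X1 x u l1 \<and> u \<in> Inr ` X1 \<and> seg0 B u z l2 \<and> l = natsum l1 l2)"
proof (induction rule: W.induct)
  case (single x y l) then show ?case by simp
next
  case (step x y l z l') then show ?case by blast
qed

lemma W_first: "W X0 B X1 x z l \<Longrightarrow> seg0 B x z l \<or>
  (\<exists>u l1 l2. seg0 B x u l1 \<and> u \<in> Inr ` X1 \<and> W X0 B X1 u z l2 \<and> l = natsum l1 l2)"
proof (induction rule: W.induct)
  case (single x y l)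
  then show ?case by auto
next
  case (step x y l z l')
  from step.IH show ?case
  proof
    assume "seg0 B x y l"
    moreover have "W X0 B X1 y z l'" using step Inr_gnodes by (metis W.single)
    ultimately show ?case using step by blast
  next
    assume "\<exists>u l1 l2. seg0 B x u l1 \<and> u \<in> Inr ` X1 \<and> W X0 B X1 u y l2 \<and> l = natsum l1 l2"
    then obtain u l1 l2 where h: "seg0 B x u l1" "u \<in> Inr ` X1" "W X0 B X1 u y l2" "l = natsum l1 l2" by blast
    have w: "W X0 B X1 u z (natsum l2 l')" using W.step[OF h(3) step(2,3,4)] .
    have "natsum l l' = natsum l1 (natsum l2 l')" using h by (simp add: natsum_assoc)
    then show ?case using h w by blast
  qed
qed

lemma W_concat0:
  assumes a: "W X0 B X1 x (Inl v) a" and b: "W X0 B X1 (Inl v) z b"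
  shows "\<exists>c. W X0 B X1 x z c \<and> fst c \<le> fst a + fst b"
proof -
  have gx: "x \<in> gnodes X0 X1" and gz: "z \<in> gnodes X0 X1" using W_gnodes[OF a] W_gnodes[OF b] by auto
  have "\<exists>p e a2. p \<in> gnodes X0 X1 \<and> seg0 B p (Inl v) a2 \<and> fst a = e + fst a2 \<and>
     (\<forall>q c. W X0 B X1 p q c \<longrightarrow> (\<exists>c'. W X0 B X1 x q c' \<and> fst c' \<le> e + fst c))"
  proof (cases "seg0 B x (Inl v) a")
    case True then show ?thesis using gx by (intro exI[of _ x] exI[of _ 0] exI[of _ a]) auto
  next
    case False
    then obtain u l1 l2 where h: "W X0 B X1 x u l1" "u \<in> Inr ` X1" "seg0 B u (Inl v) l2" "a = natsum l1 l2"
      using W_last[OF a] by blast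
    have "\<forall>q c. W X0 B X1 u q c \<longrightarrow> (\<exists>c'. W X0 B X1 x q c' \<and> fst c' \<le> fst l1 + fst c)"
    proof (intro allI impI)
      fix q c assume "W X0 B X1 u q c"
      then have "W X0 B X1 x q (natsum l1 c)" using W_concat h by metis
      then show "\<exists>c'. W X0 B X1 x q c' \<and> fst c' \<le> fst l1 + fst c" by (auto simp: natsum_def)
    qed
    then show ?thesis using h Inr_gnodes[of u X1 X0]
      by (intro exI[of _ u] exI[of _ "fst l1"] exI[of _ l2]) (auto simp: natsum_def)
  qed
  then obtain p e a2 where P: "p \<in> gnodes X0 X1" "seg0 B p (Inl v) a2" "fst a = e + fst a2"
     "\<forall>q c. W X0 B X1 p q c \<longrightarrow> (\<exists>c'. W X0 B X1 x q c' \<and> fst c' \<le> e + fst c)" by blast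
  have "\<exists>q e' b1. q \<in> gnodes X0 X1 \<and> seg0 B (Inl v) q b1 \<and> fst b = fst b1 + e' \<and>
     (\<forall>c. W X0 B X1 x q c \<longrightarrow> (\<exists>c'. W X0 B X1 x z c' \<and> fst c' \<le> fst c + e'))"
  proof (cases "seg0 B (Inl v) z b")
    case True then show ?thesis using gz by (intro exI[of _ z] exI[of _ 0] exI[of _ b]) auto
  next
    case False
    then obtain u l1 l2 where h: "seg0 B (Inl v) u l1" "u \<in> Inr ` X1" "W X0 B X1 u z l2" "b = natsum l1 l2"
      using W_first[OF b] by blast
    have "\<forall>c. W X0 B X1 x u c \<longrightarrow> (\<exists>c'. W X0 B X1 x z c' \<and> fst c' \<le> fst c + fst l2)"
    proof (intro allI impI)
      fix c assume "W X0 B X1 x u c"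
      then have "W X0 B X1 x z (natsum c l2)" using W_concat h by metis
      then show "\<exists>c'. W X0 B X1 x z c' \<and> fst c' \<le> fst c + fst l2" by (auto simp: natsum_def)
    qed
    then show ?thesis using h Inr_gnodes[of u X1 X0]
      by (intro exI[of _ u] exI[of _ "fst l2"] exI[of _ l1]) (auto simp: natsum_def)
  qed
  then obtain q e' b1 where Q: "q \<in> gnodes X0 X1" "seg0 B (Inl v) q b1" "fst b = fst b1 + e'"
     "\<forall>c. W X0 B X1 x q c \<longrightarrow> (\<exists>c'. W X0 B X1 x z c' \<and> fst c' \<le> fst c + e')" by blast
  obtain c where c: "seg0 B p q c" "fst c \<le> fst a2 + fst b1" using seg_merge[OF P(2) Q(2)] by blast
  have w1: "W X0 B X1 p q c" using c P Q by (auto intro: W.single)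
  obtain c' where c': "W X0 B X1 x q c'" "fst c' \<le> e + fst c" using P(4) w1 by blast
  obtain c'' where c'': "W X0 B X1 x z c''" "fst c'' \<le> fst c' + e'" using Q(4) c'(1) by blast
  have "fst c'' \<le> fst a + fst b" using c c' c'' P(3) Q(3) by linarith
  then show ?thesis using c'' by blast
qed



lemma hw_tri:
  assumes "has_walk X0 B X1 x y a" "has_walk X0 B X1 y z b"
  shows "\<exists>c. has_walk X0 B X1 x z c \<and> fst c \<le> fst a + fst b"
proof -
  have g: "x \<in> gnodes X0 X1" "y \<in> gnodes X0 X1" "z \<in> gnodes X0 X1" using assms by (auto simp: has_walk_def)
  consider "x = y \<and> a = (0,0)" | "y = z \<and> b = (0,0)" | "W X0 B X1 x y a" "W X0 B X1 y z b"
    using assms hw_iff by metis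
  then show ?thesis
  proof cases
    case 1 then show ?thesis using assms by (intro exI[of _ b]) auto
  next
    case 2 then show ?thesis using assms by (intro exI[of _ a]) auto
  next
    case 3
    show ?thesis
    proof (cases "y \<in> Inr ` X1")
      case True
      then have "W X0 B X1 x z (natsum a b)" using W_concat 3 by metis
      then show ?thesis using g by (auto simp: hw_iff natsum_def)
    next
      case False
      then obtain v where "y = Inl v" using g by (auto simp: gnodes_def)
      then show ?thesis using W_concat0[of X0 B X1 x v a z b] 3 g by (auto simp: hw_iff)
    qed
  qed
qed

lemma hw_sym: "has_walk X0 B X1 x y l \<Longrightarrow> has_walk X0 B X1 y x l"
  using W_rev by (metis hw_iff)

lemma hw_refl: "x \<in> gnodes X0 X1 \<Longrightarrow> has_walk X0 B X1 x x (0,0)"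
  by (simp add: hw_iff)

lemma wdist_walk:
  assumes "wconnected1 X0 B X1" "x \<in> gnodes X0 X1" "y \<in> gnodes X0 X1"
  shows "has_walk X0 B X1 x y (wdist X0 B X1 x y)"
proof -
  obtain l where "has_walk X0 B X1 x y l" using assms unfolding wconnected1_def by blast
  then show ?thesis unfolding wdist_def by (rule LeastI)
qed

lemma wdist_le: "has_walk X0 B X1 x y l \<Longrightarrow> wdist X0 B X1 x y \<le> l"
  unfolding wdist_def by (rule Least_le)

lemma fst_mono: "(a::wlen) \<le> b \<Longrightarrow> fst a \<le> fst b"
  by (cases a; cases b) auto

lemma wdist_fst_le: "has_walk X0 B X1 x y l \<Longrightarrow> fst (wdist X0 B X1 x y) \<le> fst l"
  using wdist_le fst_mono by blast

lemma wdist_tri: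
  assumes "wconnected1 X0 B X1" "x \<in> gnodes X0 X1" "y \<in> gnodes X0 X1" "z \<in> gnodes X0 X1"
  shows "fst (wdist X0 B X1 x z) \<le> fst (wdist X0 B X1 x y) + fst (wdist X0 B X1 y z)"
proof -
  obtain c where "has_walk X0 B X1 x z c" "fst c \<le> fst (wdist X0 B X1 x y) + fst (wdist X0 B X1 y z)"
    using hw_tri[OF wdist_walk[OF assms(1,2,3)] wdist_walk[OF assms(1,3,4)]] by blast
  then show ?thesis using wdist_fst_le by fastforce
qed

lemma wdist_sym:
  assumes "wconnected1 X0 B X1" "x \<in> gnodes X0 X1" "y \<in> gnodes X0 X1"
  shows "wdist X0 B X1 x y = wdist X0 B X1 y x"
proof -
  have "wdist X0 B X1 x y \<le> wdist X0 B X1 y x"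
    using wdist_le hw_sym wdist_walk assms by metis
  moreover have "wdist X0 B X1 y x \<le> wdist X0 B X1 x y"
    using wdist_le hw_sym wdist_walk assms by metis
  ultimately show ?thesis by simp
qed

lemma wdist_refl: "x \<in> gnodes X0 X1 \<Longrightarrow> wdist X0 B X1 x x = (0,0)"
proof -
  assume "x \<in> gnodes X0 X1"
  then have "wdist X0 B X1 x x \<le> (0,0)" using wdist_le hw_refl by metis
  then show ?thesis by (cases "wdist X0 B X1 x x") auto
qed

lemma W_split:
  "W X0 B X1 x z l \<Longrightarrow> x \<in> Inr ` X1 \<Longrightarrow> h \<le> fst l \<Longrightarrow>
   \<exists>w\<in>Inr ` X1. \<exists>l1 l2. has_walk X0 B X1 x w l1 \<and> has_walk X0 B X1 w z l2 \<and>
     fst l = fst l1 + fst l2 \<and> h \<le> fst l1 + 2 \<and> fst l1 \<le> h + 2"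
proof (induction rule: W.induct)
  case (single x y l)
  have "has_walk X0 B X1 x x (0,0)" using single Inr_gnodes hw_refl by metis
  moreover have "has_walk X0 B X1 x y l" using single by (auto simp: hw_iff intro: W.single)
  moreover have "fst l \<le> 2" using seg_fst single by blast
  ultimately show ?case using single by (intro bexI[of _ x] exI[of _ "(0,0)"] exI[of _ l]) auto
next
  case (step x y l z l')
  have hy: "has_walk X0 B X1 y z l'" using step Inr_gnodes by (auto simp: hw_iff intro: W.single)
  show ?case
  proof (cases "h \<le> fst l")
    case True
    then obtain w l1 l2 where w: "w \<in> Inr ` X1" "has_walk X0 B X1 x w l1" "has_walk X0 B X1 w y l2"
      "fst l = fst l1 + fst l2" "h \<le> fst l1 + 2" "fst l1 \<le> h + 2" using step by blast
    have "has_walk X0 B X1 w z (natsum l2 l')"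
    proof -
      from w(3) consider "w = y \<and> l2 = (0,0)" | "W X0 B X1 w y l2" using hw_iff by metis
      then show ?thesis
      proof cases
        case 1 then show ?thesis using hy by (simp add: natsum_def)
      next
        case 2 then show ?thesis using W.step[OF 2 step(2,3,4)] w Inr_gnodes step by (auto simp: hw_iff)
      qed
    qed
    then show ?thesis using w by (intro bexI[of _ w] exI[of _ l1] exI[of _ "natsum l2 l'"]) (auto simp: natsum_def)
  next
    case False
    have "has_walk X0 B X1 x y l" using W_gnodes[OF step(1)] step(1) hw_iff by blast
    moreover have "fst (natsum l l') = fst l + fst l' \<and> h \<le> fst l + 2 \<and> fst l \<le> h + 2"
      using False step(7) seg_fst[OF step(4)] by (auto simp: natsum_def)
    ultimately show ?thesis using hy step(2) by blast
  qed
qed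

lemma hw_split:
  "has_walk X0 B X1 x z l \<Longrightarrow> x \<in> Inr ` X1 \<Longrightarrow> h \<le> fst l \<Longrightarrow>
   \<exists>w\<in>Inr ` X1. \<exists>l1 l2. has_walk X0 B X1 x w l1 \<and> has_walk X0 B X1 w z l2 \<and>
     fst l = fst l1 + fst l2 \<and> h \<le> fst l1 + 2 \<and> fst l1 \<le> h + 2"
proof -
  assume a: "has_walk X0 B X1 x z l" "x \<in> Inr ` X1" "h \<le> fst l"
  from a(1) consider "x = z \<and> l = (0,0)" | "W X0 B X1 x z l" using hw_iff by metis
  then show ?thesis
  proof cases
    case 1 then show ?thesis using a hw_refl Inr_gnodes by (intro bexI[of _ x] exI[of _ "(0,0)"] exI[of _ "(0,0)"]) auto
  next
    case 2 then show ?thesis using W_split a by blast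
  qed
qed



definition phi :: "int \<Rightarrow> real" where
  "phi i = 1/2 + arctan (real_of_int i) / pi"

lemma phi_pos: "0 < phi i"
proof -
  have "- (pi / 2) < arctan (real_of_int i)" using arctan_bounded by blast
  then have "- (1/2) < arctan (real_of_int i) / pi" using pi_gt_zero by (simp add: field_simps)
  then show ?thesis unfolding phi_def by linarith
qed

lemma phi_lt1: "phi i < 1"
proof -
  have "arctan (real_of_int i) < pi / 2" using arctan_bounded by blast
  then have "arctan (real_of_int i) / pi < 1/2" using pi_gt_zero by (simp add: field_simps)
  then show ?thesis unfolding phi_def by linarith
qed

lemma phi_mono: assumes "i < j" shows "phi i < phi j"
proof -
  have "arctan (real_of_int i) < arctan (real_of_int j)" using assms by (simp add: arctan_less_iff)
  then have "arctan (real_of_int i) / pi < arctan (real_of_int j) / pi" using pi_gt_zero by (simp add: divide_strict_right_mono)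
  then show ?thesis unfolding phi_def by linarith
qed

lemma nat_floor_bounds: "0 \<le> (x::real) \<Longrightarrow> x - 1 < real (nat \<lfloor>x\<rfloor>) \<and> real (nat \<lfloor>x\<rfloor>) \<le> x"
  by linarith

lemma ceil_bound: "0 < (e::real) \<Longrightarrow> nat \<lceil>A / e\<rceil> \<le> K \<Longrightarrow> A \<le> real K * e"
proof -
  assume e: "0 < e" and k: "nat \<lceil>A / e\<rceil> \<le> K"
  have "A / e \<le> real K" using k real_nat_ceiling_ge[of "A / e"] by linarith
  then show ?thesis using e by (simp add: pos_divide_le_eq)
qed

lemma natsum_lt: "fst a + m < fst b \<Longrightarrow> natsum a (omega_times m) \<le> b"
  by (cases a; cases b) (auto simp: natsum_def omega_times_def)

lemma hs_gn: "hyper_seq X0 X1 s \<Longrightarrow> s n \<in> gnodes X0 X1"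
  by (auto simp: hyper_seq_def gnodes_def)

lemma uf_not: "free_ultrafilter F \<Longrightarrow> \<not> eventually P F \<Longrightarrow> eventually (\<lambda>n. \<not> P n) F"
  unfolding free_ultrafilter_def by blast

lemma uf_nonfalse: "free_ultrafilter F \<Longrightarrow> eventually P F \<Longrightarrow> \<exists>n. P n"
  unfolding free_ultrafilter_def using eventually_False by (metis eventually_mono)

theorem theorem11p2:
  fixes X0 :: "'v set" and B :: "'v set set" and X1 :: "'v node1 set"
    and F :: "nat filter"
  assumes "free_ultrafilter F"
    and "one_graph X0 B X1"
    and "wconnected1 X0 B X1"
    and "infinite {u. boundary_1node B X1 u}"
    and "\<exists>s. hyper_seq X0 X1 s \<and> \<not> in_principal1 F X0 B X1 s"
  shows "\<exists>g :: int \<Rightarrow> nat \<Rightarrow> 'v gnode.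
           (\<forall>i. hyper_seq X0 X1 (g i) \<and> \<not> in_principal1 F X0 B X1 (g i)) \<and>
           (\<forall>i j. i < j \<longrightarrow> closer1 F X0 B X1 (g i) (g j))"
proof -
  note uf = assms(1) and wc = assms(3)
  have "{u. boundary_1node B X1 u} \<noteq> {}" using assms(4) by (metis finite.emptyI)
  then obtain u0 where "boundary_1node B X1 u0" by blast
  then have u0: "u0 \<in> X1" by (simp add: boundary_1node_def)
  define x0 :: "'v gnode" where "x0 = Inr u0"
  have x0i: "x0 \<in> Inr ` X1" using u0 x0_def by auto
  then have x0g: "x0 \<in> gnodes X0 X1" by (rule Inr_gnodes)
  obtain s where s: "hyper_seq X0 X1 s" "\<not> in_principal1 F X0 B X1 s" using assms(5) by blast
  have sg: "s n \<in> gnodes X0 X1" for n using hs_gn[OF s(1)] .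
  define K where "K n = fst (wdist X0 B X1 x0 (s n))" for n
  have Kinf: "eventually (\<lambda>n. k \<le> K n) F" for k
  proof -
    have "\<not> eventually (\<lambda>n. wdist X0 B X1 x0 (s n) \<le> omega_times k) F"
      using s(2) x0g unfolding in_principal1_def limitedly_distant1_def by blast
    then have "eventually (\<lambda>n. \<not> wdist X0 B X1 x0 (s n) \<le> omega_times k) F" using uf_not[OF uf] by blast
    then show ?thesis
    proof (rule eventually_mono)
      fix n assume "\<not> wdist X0 B X1 x0 (s n) \<le> omega_times k"
      then show "k \<le> K n" unfolding K_def omega_times_def
        by (cases "wdist X0 B X1 x0 (s n)") auto
    qed
  qed
  define hh where "hh i n = nat \<lfloor>real (K n) * phi i\<rfloor>" for i n
  have hhb: "real (K n) * phi i - 1 < real (hh i n) \<and> real (hh i n) \<le> real (K n) * phi i" for i n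
  proof -
    have "0 \<le> real (K n) * phi i" using phi_pos[of i] by simp
    then show ?thesis unfolding hh_def by (rule nat_floor_bounds)
  qed
  have hhK: "hh i n \<le> K n" for i n
  proof -
    have "real (K n) * phi i \<le> real (K n)" using phi_lt1[of i] by (simp add: mult_left_le less_imp_le)
    then show ?thesis using hhb[of n i] by linarith
  qed
  have ex: "\<exists>w. w \<in> Inr ` X1 \<and> hh i n \<le> fst (wdist X0 B X1 x0 w) + 2 \<and> fst (wdist X0 B X1 x0 w) \<le> hh i n + 2" for i n
  proof -
    have hw: "has_walk X0 B X1 x0 (s n) (wdist X0 B X1 x0 (s n))" using wdist_walk[OF wc x0g sg] .
    obtain w l1 l2 where w: "w \<in> Inr ` X1" "has_walk X0 B X1 x0 w l1" "has_walk X0 B X1 w (s n) l2"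
      "K n = fst l1 + fst l2" "hh i n \<le> fst l1 + 2" "fst l1 \<le> hh i n + 2"
      using hw_split[OF hw x0i hhK[of i n, unfolded K_def]] unfolding K_def by blast
    have wg: "w \<in> gnodes X0 X1" using w(1) by (rule Inr_gnodes)
    have "fst (wdist X0 B X1 x0 w) \<le> fst l1" using wdist_fst_le[OF w(2)] .
    moreover have "K n \<le> fst (wdist X0 B X1 x0 w) + fst (wdist X0 B X1 w (s n))"
      unfolding K_def using wdist_tri[OF wc x0g wg sg] .
    moreover have "fst (wdist X0 B X1 w (s n)) \<le> fst l2" using wdist_fst_le[OF w(3)] .
    ultimately show ?thesis using w by (intro exI[of _ w]) auto
  qed
  define g where "g i n = (SOME w. w \<in> Inr ` X1 \<and> hh i n \<le> fst (wdist X0 B X1 x0 w) + 2 \<and> fst (wdist X0 B X1 x0 w) \<le> hh i n + 2)" for i n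
  have g: "g i n \<in> Inr ` X1 \<and> hh i n \<le> fst (wdist X0 B X1 x0 (g i n)) + 2 \<and>
      fst (wdist X0 B X1 x0 (g i n)) \<le> hh i n + 2" for i n
    unfolding g_def by (rule someI_ex) (rule ex)
  have gg: "g i n \<in> gnodes X0 X1" for i n using g[of i n] Inr_gnodes by blast
  define d where "d i n = fst (wdist X0 B X1 x0 (g i n))" for i n
  have dlo: "real (K n) * phi i - 3 < real (d i n)" for i n using g[of i n] hhb[of n i] unfolding d_def by linarith
  have dhi: "real (d i n) \<le> real (K n) * phi i + 2" for i n using g[of i n] hhb[of n i] unfolding d_def by linarith
  have hs: "hyper_seq X0 X1 (g i)" for i using g unfolding hyper_seq_def by blast
  have np: "\<not> in_principal1 F X0 B X1 (g i)" for i
  proof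
    assume "in_principal1 F X0 B X1 (g i)"
    then obtain x k where x: "x \<in> gnodes X0 X1" "eventually (\<lambda>n. wdist X0 B X1 x (g i n) \<le> omega_times k) F"
      unfolding in_principal1_def limitedly_distant1_def by blast
    define c where "c = fst (wdist X0 B X1 x0 x)"
    have "eventually (\<lambda>n. nat \<lceil>real (c + k + 3) / phi i\<rceil> \<le> K n) F" by (rule Kinf)
    then have "eventually (\<lambda>n. False) F" using x(2)
    proof (rule eventually_elim2)
      fix n assume a1: "nat \<lceil>real (c + k + 3) / phi i\<rceil> \<le> K n" and a2: "wdist X0 B X1 x (g i n) \<le> omega_times k"
      have "real (c + k + 3) \<le> real (K n) * phi i" using ceil_bound[OF phi_pos a1] .
      then have "c + k < d i n" using dlo[of n i] by linarith
      moreover have "d i n \<le> c + fst (wdist X0 B X1 x (g i n))"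
        unfolding d_def c_def using wdist_tri[OF wc x0g x(1) gg] .
      moreover have "fst (wdist X0 B X1 x (g i n)) \<le> k" using fst_mono[OF a2] by (simp add: omega_times_def)
      ultimately show False by linarith
    qed
    then show False using uf_nonfalse[OF uf] by blast
  qed
  have ld: "limitedly_distant1 F X0 B X1 a a" if "\<And>n. a n \<in> gnodes X0 X1" for a
    unfolding limitedly_distant1_def
    by (intro exI[of _ 0] always_eventually allI) (simp add: omega_times_def wdist_refl[OF that])
  have cl: "closer1 F X0 B X1 (g i) (g j)" if ij: "i < j" for i j
    unfolding closer1_def
  proof (intro exI conjI)
    show "hyper_seq X0 X1 (g i)" "hyper_seq X0 X1 (g j)" by (rule hs)+
    show "hyper_seq X0 X1 (\<lambda>_. x0)" using x0i unfolding hyper_seq_def by blast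
    show "limitedly_distant1 F X0 B X1 (g i) (g i)" "limitedly_distant1 F X0 B X1 (g j) (g j)"
      using ld gg by blast+
    show "in_principal1 F X0 B X1 (\<lambda>_. x0)" unfolding in_principal1_def using x0g ld[of "\<lambda>_. x0"] by auto
    show "\<forall>m. eventually (\<lambda>n. natsum (wdist X0 B X1 (g i n) x0) (omega_times m) \<le> wdist X0 B X1 (g j n) x0) F"
    proof
      fix m
      have e: "0 < phi j - phi i" using phi_mono[OF ij] by simp
      have "eventually (\<lambda>n. nat \<lceil>real (m + 6) / (phi j - phi i)\<rceil> \<le> K n) F" by (rule Kinf)
      then show "eventually (\<lambda>n. natsum (wdist X0 B X1 (g i n) x0) (omega_times m) \<le> wdist X0 B X1 (g j n) x0) F"
      proof (rule eventually_mono)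
        fix n assume a1: "nat \<lceil>real (m + 6) / (phi j - phi i)\<rceil> \<le> K n"
        have "real (m + 6) \<le> real (K n) * (phi j - phi i)" using ceil_bound[OF e a1] .
        then have "real m + 6 \<le> real (K n) * phi j - real (K n) * phi i" by (simp add: right_diff_distrib)
        then have "real (d i n + m) < real (d j n)" using dlo[of n j] dhi[of i n] by simp
        then have "d i n + m < d j n" by linarith
        then have "fst (wdist X0 B X1 (g i n) x0) + m < fst (wdist X0 B X1 (g j n) x0)"
          unfolding d_def using wdist_sym[OF wc x0g gg] by simp
        then show "natsum (wdist X0 B X1 (g i n) x0) (omega_times m) \<le> wdist X0 B X1 (g j n) x0"
          by (rule natsum_lt)
      qed
    qed
  qed
  show ?thesis using hs np cl by blast
qed

end
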